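(* Define, for $n'\in\mathbb{N}_+$ and $n\in\{0,\dots,n'\}$, $\gamma_{n,n'}=\sum_{j=0}^{n}\binom{n'}{j}{\rm e}_{n'-j}$. Then the collection $(\gamma_{n,n'})_{n'\in\mathbb{N}_+,n\in\{0,\dots,n'\}}$ belongs to $\Gamma$ (i.e. satisfies the bound condition).
   Context: $\sigma(x)=\max(0,x)$; $\mathrm{RL}(n,n')$ ($n,n'\in\mathbb{N}_+$) is the set of maps $h:\mathbb{R}^n\to\mathbb{R}^{n'}$, $h(x)_i=\sigma(\langle x,w_i\rangle+b_i)$ for some $W\in\mathbb{R}^{n'\times n}$ with rows $w_i$, $b\in\mathbb{R}^{n'}$; convention: $\mathrm{RL}(0,n')$ are constant maps $\{0\}\to\mathbb{R}^{n'}$ with $\mathcal{H}_{n'}(\mathcal{S}_h)={\rm e}_0$. $S_h(x)_i=1$ iff $\langle x,w_i\rangle+b_i>0$ else $0$; $\mathcal{S}_h=\{S_h(x):x\in\mathbb{R}^n\}$; $|s|=\sum_is_i$. $V$: sequences $(v_j)_{j\in\mathbb{N}}$ of nonnegative integers with finite sum; ${\rm e}_i$ has $({\rm e}_i)_j=\delta_{ij}$; $v\preceq w$ iff $\sum_{j\ge J}v_j\le\sum_{j\ge J}w_j$ for all $J\in\mathbb{N}$; for finite families, $\max_i(v^{(i)})_J=\max_i\sum_{j\ge J}v^{(i)}_j-\max_i\sum_{j\ge J+1}v^{(i)}_j$. $\mathcal{H}_{n'}(\mathcal{S})=(|\{s\in\mathcal{S}:|s|=j\}|)_j$. $\Gamma$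 (bound condition): families $(\gamma_{n,n'})_{n'\in\mathbb{N}_+,n\in\{0,\dots,n'\}}$ in $V$ with (i) $\max\{\mathcal{H}_{n'}(\mathcal{S}_h):h\in\mathrm{RL}(n,n')\}\preceq\gamma_{n,n'}$ for all $n'\in\mathbb{N}_+$, $n\in\{0,\dots,n'\}$, and (ii) $n\le\tilde n\le n'\Rightarrow\gamma_{n,n'}\preceq\gamma_{\tilde n,n'}$. *)

theory Defs
  imports Complex_Main
begin

definition relu :: "real \<Rightarrow> real" where
  "relu t = max 0 t"

text \<open>Vectors in R^n are represented as functions nat => real, only coordinates k < n matter.
 A ReLU layer h in RL(n,n') is given by weights W (row i = w_i, W i k for i < n', k < n)
 and biases b (b i for i < n').\<close>
definition RL_layer :: "nat \<Rightarrow> nat \<Rightarrow> (nat \<Rightarrow> nat \<Rightarrow> real) \<Rightarrow> (nat \<Rightarrow> real)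
    \<Rightarrow> (nat \<Rightarrow> real) \<Rightarrow> (nat \<Rightarrow> real)" where
  "RL_layer n n' W b x = (\<lambda>i. if i < n' then relu ((\<Sum>k<n. x k * W i k) + b i) else 0)"

text \<open>Activation pattern S_h(x) in {0,1}^{n'} (as nat => nat, zero at indices >= n').\<close>
definition act_pattern :: "nat \<Rightarrow> nat \<Rightarrow> (nat \<Rightarrow> nat \<Rightarrow> real) \<Rightarrow> (nat \<Rightarrow> real)
    \<Rightarrow> (nat \<Rightarrow> real) \<Rightarrow> (nat \<Rightarrow> nat)" where
  "act_pattern n n' W b x = (\<lambda>i. if i < n' \<and> (\<Sum>k<n. x k * W i k) + b i > 0 then 1 else 0)"

definition patterns :: "nat \<Rightarrow> nat \<Rightarrow> (nat \<Rightarrow> nat \<Rightarrow> real) \<Rightarrow> (nat \<Rightarrow> real)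
    \<Rightarrow> (nat \<Rightarrow> nat) set" where
  "patterns n n' W b = {act_pattern n n' W b x | x. \<forall>k\<ge>n. x k = 0}"

definition pat_size :: "nat \<Rightarrow> (nat \<Rightarrow> nat) \<Rightarrow> nat" where
  "pat_size n' s = (\<Sum>i<n'. s i)"

definition hist :: "nat \<Rightarrow> (nat \<Rightarrow> nat) set \<Rightarrow> (nat \<Rightarrow> nat)" where
  "hist n' S = (\<lambda>j. card {s \<in> S. pat_size n' s = j})"

text \<open>The space V: nonnegative integer sequences with finite sum (= finite support).\<close>
definition inV :: "(nat \<Rightarrow> nat) \<Rightarrow> bool" where
  "inV v \<longleftrightarrow> finite {j. v j \<noteq> 0}"

definition unitv :: "nat \<Rightarrow> (nat \<Rightarrow> nat)" ("\<ee>") where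
  "unitv i = (\<lambda>j. if j = i then 1 else 0)"

definition tail :: "(nat \<Rightarrow> nat) \<Rightarrow> nat \<Rightarrow> nat" where
  "tail v J = (\<Sum>j \<in> {j. J \<le> j \<and> v j \<noteq> 0}. v j)"

definition vle :: "(nat \<Rightarrow> nat) \<Rightarrow> (nat \<Rightarrow> nat) \<Rightarrow> bool" (infix "\<preceq>\<^sub>V" 50) where
  "v \<preceq>\<^sub>V w \<longleftrightarrow> (\<forall>J. tail v J \<le> tail w J)"

text \<open>Maximum of a finite (nonempty) family of elements of V.\<close>
definition vmax :: "(nat \<Rightarrow> nat) set \<Rightarrow> (nat \<Rightarrow> nat)" where
  "vmax A = (\<lambda>J. Max ((\<lambda>v. tail v J) ` A) - Max ((\<lambda>v. tail v (Suc J)) ` A))"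

definition hist_family :: "nat \<Rightarrow> nat \<Rightarrow> (nat \<Rightarrow> nat) set" where
  "hist_family n n' = (if n = 0 then {\<ee> 0}
     else {hist n' (patterns n n' W b) | W b. True})"

definition bound_condition :: "(nat \<Rightarrow> nat \<Rightarrow> (nat \<Rightarrow> nat)) \<Rightarrow> bool" where
  "bound_condition g \<longleftrightarrow>
     (\<forall>n' n. 1 \<le> n' \<and> n \<le> n' \<longrightarrow> inV (g n n')) \<and>
     (\<forall>n' n. 1 \<le> n' \<and> n \<le> n' \<longrightarrow> vmax (hist_family n n') \<preceq>\<^sub>V g n n') \<and>
     (\<forall>n' n m. 1 \<le> n' \<and> n \<le> m \<and> m \<le> n' \<longrightarrow> g n n' \<preceq>\<^sub>V g m n')"

definition gamma_bin :: "nat \<Rightarrow> nat \<Rightarrow> (nat \<Rightarrow> nat)" where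
  "gamma_bin n n' = (\<lambda>k. \<Sum>j\<le>n. (n' choose j) * \<ee> (n' - j) k)"

end

theory Submission
  imports Defs
begin

definition aff :: "nat set \<Rightarrow> (nat \<Rightarrow> nat \<Rightarrow> real) \<Rightarrow> (nat \<Rightarrow> real) \<Rightarrow> (nat \<Rightarrow> real) \<Rightarrow> nat \<Rightarrow> real" where
  "aff K W b x i = (\<Sum>k\<in>K. x k * W i k) + b i"

definition pat :: "nat set \<Rightarrow> nat \<Rightarrow> (nat \<Rightarrow> nat \<Rightarrow> real) \<Rightarrow> (nat \<Rightarrow> real) \<Rightarrow> (nat \<Rightarrow> real) \<Rightarrow> nat \<Rightarrow> nat" where
  "pat K m W b x = (\<lambda>i. if i < m \<and> aff K W b x i > 0 then 1 else 0)"

definition Pats where "Pats K m W b = range (pat K m W b)"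

definition G :: "nat \<Rightarrow> nat \<Rightarrow> nat \<Rightarrow> nat" where
  "G m n k = (\<Sum>i\<le>min n k. m choose i)"

definition hW :: "(nat \<Rightarrow> nat \<Rightarrow> real) \<Rightarrow> nat \<Rightarrow> nat \<Rightarrow> nat \<Rightarrow> nat \<Rightarrow> real" where
  "hW W m k0 = (\<lambda>i j. W i j - W i k0 * W m j / W m k0)"

definition hb :: "(nat \<Rightarrow> nat \<Rightarrow> real) \<Rightarrow> (nat \<Rightarrow> real) \<Rightarrow> nat \<Rightarrow> nat \<Rightarrow> nat \<Rightarrow> real" where
  "hb W b m k0 = (\<lambda>i. b i - W i k0 * b m / W m k0)"

lemma Pats_sub: "Pats K m W b \<subseteq> (\<lambda>S i. if i \<in> S then 1 else 0) ` Pow {..<m}"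
proof
  fix s assume "s \<in> Pats K m W b"
  then obtain x where s: "s = pat K m W b x" unfolding Pats_def by auto
  show "s \<in> (\<lambda>S i. if i \<in> S then 1 else 0) ` Pow {..<m}"
    by (rule image_eqI[of _ _ "{i. i < m \<and> aff K W b x i > 0}"]) (auto simp: s pat_def)
qed

lemma Pats_finite: "finite (Pats K m W b)"
  using Pats_sub by (rule finite_subset) auto

lemma Pats_card: "card (Pats K m W b) \<le> 2 ^ m"
proof -
  have "card (Pats K m W b) \<le> card ((\<lambda>S i. if i \<in> S then (1::nat) else 0) ` Pow {..<m})"
    using Pats_sub by (rule card_mono[rotated]) auto
  also have "\<dots> \<le> card (Pow {..<m::nat})" by (rule card_image_le) auto
  finally show ?thesis by (simp add: card_Pow)
qed

lemma pat_size_le: assumes "s \<in> Pats K m W b" shows "pat_size m s \<le> m"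
proof -
  obtain x where s: "s = pat K m W b x" using assms unfolding Pats_def by auto
  have "pat_size m s \<le> (\<Sum>i<m. (1::nat))" unfolding pat_size_def s pat_def by (rule sum_mono) auto
  thus ?thesis by simp
qed

lemma G_aux: "(\<Sum>i\<le>Suc N. Suc m choose i) = (\<Sum>i\<le>Suc N. m choose i) + (\<Sum>i\<le>N. m choose i)"
  by (induction N) auto

lemma G_pascal: "G (Suc m) (Suc n) (Suc k) = G m (Suc n) (Suc k) + G m n k"
  unfolding G_def using G_aux[where N="min n k" and m=m] by simp

lemma G_mono: "G m n k \<le> G (Suc m) n k"
  unfolding G_def by (rule sum_mono) (simp add: binomial_right_mono)

lemma G_0_aux: "(\<Sum>i\<le>N. (0::nat) choose i) = 1"
  by (induction N) auto

lemma G_0: "G 0 n k = 1"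
  unfolding G_def by (rule G_0_aux)

lemma G_Suc_k: "G m n (Suc k) = G m n k + (if Suc k \<le> n then m choose Suc k else 0)"
  unfolding G_def by (cases "Suc k \<le> n") (auto simp: min_def)

lemma aff_comb: "aff K W b (\<lambda>j. (1-t)*x j + t*y j) i = (1-t)*aff K W b x i + t*aff K W b y i"
  proof -
  have "(\<Sum>k\<in>K. ((1-t)*x k + t*y k) * W i k) = (\<Sum>k\<in>K. (1-t)*(x k * W i k) + t*(y k * W i k))"
    by (rule sum.cong) (auto simp: algebra_simps)
  also have "\<dots> = (1-t) * (\<Sum>k\<in>K. x k * W i k) + t * (\<Sum>k\<in>K. y k * W i k)"
    by (simp add: sum.distrib sum_distrib_left)
  finally show ?thesis unfolding aff_def by (simp add: algebra_simps)
qed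

lemma aff_hyper:
  assumes "finite K" "k0 \<in> K" "W m k0 \<noteq> 0" "aff K W b z m = 0"
  shows "aff (K - {k0}) (hW W m k0) (hb W b m k0) z i = aff K W b z i"
proof -
  let ?K = "K - {k0}"
  define Si where "Si = (\<Sum>j\<in>?K. z j * W i j)"
  define Sm where "Sm = (\<Sum>j\<in>?K. z j * W m j)"
  have ei: "aff K W b z i = z k0 * W i k0 + Si + b i"
    unfolding aff_def Si_def using assms(1,2) by (simp add: sum.remove)
  have em: "z k0 * W m k0 + Sm + b m = 0"
    using assms(4) unfolding aff_def Sm_def using assms(1,2) by (simp add: sum.remove)
  have "(\<Sum>j\<in>?K. z j * hW W m k0 i j) = Si - W i k0 / W m k0 * Sm"
    unfolding hW_def Si_def Sm_def
    by (simp add: right_diff_distrib sum_subtractf sum_distrib_left algebra_simps)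
  then have "aff ?K (hW W m k0) (hb W b m k0) z i = Si - W i k0 / W m k0 * Sm + b i - W i k0 * b m / W m k0"
    unfolding aff_def hb_def by simp
  also have "\<dots> = Si + b i - W i k0 / W m k0 * (Sm + b m)" using assms(3) by (simp add: field_simps)
  also have "Sm + b m = - (z k0 * W m k0)" using em by simp
  also have "Si + b i - W i k0 / W m k0 * (- (z k0 * W m k0)) = Si + b i + z k0 * W i k0"
    using assms(3) by (simp add: field_simps)
  finally show ?thesis using ei by simp
qed

lemma cross:
  assumes "finite K" "k0 \<in> K" "W m k0 \<noteq> 0" "pat K m W b x = pat K m W b y"
    "aff K W b x m > 0" "aff K W b y m \<le> 0"
  shows "pat K m W b x \<in> Pats (K - {k0}) m (hW W m k0) (hb W b m k0)"
proof -
  define a where "a = aff K W b x m"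
  define c where "c = aff K W b y m"
  define t where "t = a / (a - c)"
  have ac: "a - c > 0" using assms(5,6) a_def c_def by simp
  have t0: "t > 0" unfolding t_def using ac assms(5) a_def by simp
  have t1: "t \<le> 1" unfolding t_def using ac assms(6) c_def by (simp add: field_simps)
  define z where "z = (\<lambda>j. (1-t)*x j + t*y j)"
  have zm: "aff K W b z m = 0"
    unfolding z_def aff_comb a_def[symmetric] c_def[symmetric] t_def using ac
    by (simp add: field_simps)
  have pz: "pat K m W b z = pat K m W b x"
  proof
    fix i
    show "pat K m W b z i = pat K m W b x i"
    proof (cases "i < m")
      case True
      have eq: "(aff K W b x i > 0) = (aff K W b y i > 0)"
        using fun_cong[OF assms(4), of i] True unfolding pat_def by (auto split: if_splits)
      have "(aff K W b z i > 0) = (aff K W b x i > 0)"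
      proof (cases "aff K W b x i > 0")
        case True
        then have "aff K W b y i > 0" using eq by simp
        then have "(1-t)*aff K W b x i \<ge> 0" "t * aff K W b y i > 0"
          using True t0 t1 by auto
        then show ?thesis unfolding z_def aff_comb using True by linarith
      next
        case False
        then have "\<not> aff K W b y i > 0" using eq by simp
        then have "(1-t)*aff K W b x i \<le> 0" "t * aff K W b y i \<le> 0"
          using False t0 t1 by (auto intro: mult_nonneg_nonpos)
        then show ?thesis unfolding z_def aff_comb using False by linarith
      qed
      then show ?thesis unfolding pat_def by simp
    qed (simp add: pat_def)
  qed
  have "pat (K - {k0}) m (hW W m k0) (hb W b m k0) z = pat K m W b z"
    unfolding pat_def using aff_hyper[OF assms(1-3) zm] by simp
  then show ?thesis unfolding Pats_def using pz by (metis rangeI)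
qed

lemma key: "finite K \<Longrightarrow> card {s \<in> Pats K m W b. m \<le> pat_size m s + k} \<le> G m (card K) k"
proof (induction m arbitrary: K W b k)
  case 0
  have "Pats K 0 W b = {\<lambda>i. 0}" unfolding Pats_def pat_def by auto
  then show ?case by (simp add: G_0 card_mono)
next
  case (Suc m)
  define P where "P = Pats K (Suc m) W b"
  define A where "A = {s\<in>P. Suc m \<le> pat_size (Suc m) s + k}"
  define A' where "A' = {s \<in> Pats K m W b. m \<le> pat_size m s + k}"
  define r where "r = (\<lambda>s::nat\<Rightarrow>nat. s(m:=0))"
  define A1 where "A1 = {s\<in>A. s m = 1}"
  define A0 where "A0 = {s\<in>A. s m \<noteq> 1}"
  have rpat: "\<And>x. r (pat K (Suc m) W b x) = pat K m W b x"
    unfolding r_def pat_def by auto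
  have psz: "\<And>s. pat_size (Suc m) s = pat_size m s + s m" by (simp add: pat_size_def)
  have rsz: "\<And>s. pat_size m (r s) = pat_size m s" unfolding pat_size_def r_def
    by (rule sum.cong) auto
  have val: "\<And>s. s \<in> P \<Longrightarrow> s m = 1 \<or> s m = 0" unfolding P_def Pats_def pat_def by (auto split: if_splits)
  have finA: "finite A" unfolding A_def P_def using Pats_finite by auto
  have finA': "finite A'" unfolding A'_def using Pats_finite by auto
  have cA: "card A = card A1 + card A0"
  proof -
    have "A = A1 \<union> A0" "A1 \<inter> A0 = {}" unfolding A1_def A0_def by auto
    moreover have "finite A1" "finite A0" using finA unfolding A1_def A0_def by auto
    ultimately show ?thesis by (simp add: card_Un_disjoint)
  qed
  have inj: "inj_on r A1"
  proof
    fix s t assume st: "s \<in> A1" "t \<in> A1" "r s = r t"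
    have "s = (r s)(m := 1)" using st(1) unfolding A1_def r_def by auto
    also have "\<dots> = (r t)(m := 1)" using st(3) by simp
    also have "\<dots> = t" using st(2) unfolding A1_def r_def by auto
    finally show "s = t" .
  qed
  have c1: "card (r ` A1) = card A1" using inj by (rule card_image)
  have r0: "\<And>s. s \<in> A0 \<Longrightarrow> r s = s"
    using val unfolding A0_def A_def r_def by fastforce
  have sub1: "r ` A1 \<subseteq> A'"
  proof
    fix s' assume "s' \<in> r ` A1"
    then obtain s where s: "s \<in> A1" "s' = r s" by auto
    then obtain x where x: "s = pat K (Suc m) W b x" unfolding A1_def A_def P_def Pats_def by auto
    have "s' \<in> Pats K m W b" using s x rpat unfolding Pats_def by auto
    moreover have "m \<le> pat_size m s' + k" using s psz rsz unfolding A1_def A_def by auto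
    ultimately show "s' \<in> A'" unfolding A'_def by auto
  qed
  have sub0: "A0 \<subseteq> A'"
  proof
    fix s assume s: "s \<in> A0"
    then obtain x where x: "s = pat K (Suc m) W b x" unfolding A0_def A_def P_def Pats_def by auto
    have "s = r s" using r0 s by simp
    then have "s \<in> Pats K m W b" using x rpat unfolding Pats_def by auto
    moreover have "s m = 0" using s val unfolding A0_def A_def by auto
    moreover have "Suc m \<le> pat_size (Suc m) s + k" using s unfolding A0_def A_def by auto
    ultimately show "s \<in> A'" unfolding A'_def using psz by auto
  qed
  have finI: "finite (r ` A1)" "finite A0" using finA unfolding A1_def A0_def by auto
  have cU: "card A = card (r ` A1 \<union> A0) + card (r ` A1 \<inter> A0)"
    using cA c1 card_Un_Int[OF finI] by simp
  have cUle: "card (r ` A1 \<union> A0) \<le> G m (card K) k"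
    using card_mono[OF finA', of "r ` A1 \<union> A0"] sub1 sub0 Suc.IH[OF Suc.prems, of W b k] 
    unfolding A'_def by auto
  show ?case
  proof (cases "r ` A1 \<inter> A0 = {}")
    case True
    then show ?thesis using cU cUle G_mono[of m "card K" k] unfolding A_def P_def by simp
  next
    case False
    then obtain s0 where s0: "s0 \<in> r ` A1" "s0 \<in> A0" by blast
    have wit: "\<exists>x y. s' = pat K m W b x \<and> s' = pat K m W b y \<and> aff K W b x m > 0 \<and> aff K W b y m \<le> 0"
      if h1: "s' \<in> r ` A1" and h2: "s' \<in> A0" for s'
    proof -
      obtain s where s: "s \<in> A1" "s' = r s" using h1 by blast
      then obtain x where x: "s = pat K (Suc m) W b x" unfolding A1_def A_def P_def Pats_def by auto
      have xm: "aff K W b x m > 0" using s(1) x unfolding A1_def pat_def by (auto split: if_splits)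
      obtain y where y: "s' = pat K (Suc m) W b y" using h2 unfolding A0_def A_def P_def Pats_def by auto
      have ym: "\<not> aff K W b y m > 0" using h2 y unfolding A0_def pat_def by (auto split: if_splits)
      have "s' = r s'" using r0 h2 by simp
      then have "s' = pat K m W b y" using y rpat by simp
      moreover have "s' = pat K m W b x" using s x rpat by simp
      ultimately show ?thesis using xm ym by (metis not_less)
    qed
    obtain x y where xy: "s0 = pat K m W b x" "s0 = pat K m W b y" "aff K W b x m > 0" "aff K W b y m \<le> 0"
      using wit[OF s0] by blast
    have "\<exists>k0\<in>K. W m k0 \<noteq> 0"
    proof (rule ccontr)
      assume "\<not> ?thesis"
      then have "\<And>z. aff K W b z m = b m" unfolding aff_def by simp
      then show False using xy by simp
    qed
    then obtain k0 where k0: "k0 \<in> K" "W m k0 \<noteq> 0" by blast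
    have "Suc m \<le> pat_size (Suc m) s0 + k" "s0 m = 0" "s0 \<in> P"
      using s0(2) val unfolding A0_def A_def by auto
    moreover have "pat_size m s0 \<le> m" using xy(1) pat_size_le[of s0 K m W b] unfolding Pats_def by auto
    ultimately obtain k' where k': "k = Suc k'" using psz by (cases k) auto
    obtain n' where n': "card K = Suc n'" "card (K - {k0}) = n'"
      using k0(1) Suc.prems by (cases "card K") (auto simp: card_Diff_singleton)
    let ?I' = "{s \<in> Pats (K - {k0}) m (hW W m k0) (hb W b m k0). m \<le> pat_size m s + k'}"
    have subI: "r ` A1 \<inter> A0 \<subseteq> ?I'"
    proof
      fix s' assume s': "s' \<in> r ` A1 \<inter> A0"
      then obtain x y where xy: "s' = pat K m W b x" "s' = pat K m W b y" "aff K W b x m > 0" "aff K W b y m \<le> 0"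
        using wit by blast
      have "s' \<in> Pats (K - {k0}) m (hW W m k0) (hb W b m k0)"
        using cross[where K=K and ?k0.0=k0 and W=W and m=m and b=b and x=x and y=y] Suc.prems k0 xy by simp
      moreover have "Suc m \<le> pat_size (Suc m) s' + k" "s' m = 0"
        using s' val unfolding A0_def A_def by auto
      ultimately show "s' \<in> ?I'" using psz k' by auto
    qed
    have "card (r ` A1 \<inter> A0) \<le> card ?I'"
      by (rule card_mono[OF _ subI]) (simp add: Pats_finite)
    also have "\<dots> \<le> G m n' k'" using Suc.IH[of "K - {k0}" "hW W m k0" "hb W b m k0" k'] Suc.prems n' by simp
    finally have "card (r ` A1 \<inter> A0) \<le> G m n' k'" .
    then have "card A \<le> G m (card K) k + G m n' k'" using cU cUle by simp
    also have "\<dots> = G (Suc m) (card K) k" using G_pascal n' k' by simp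
    finally show ?thesis unfolding A_def P_def .
  qed
qed

lemma tail_eq: assumes "\<forall>j>N. v j = 0" shows "tail v J = (\<Sum>j\<in>{J..N}. v j)"
proof -
  have sub: "{j. J \<le> j \<and> v j \<noteq> 0} \<subseteq> {J..N}"
  proof
    fix j assume "j \<in> {j. J \<le> j \<and> v j \<noteq> 0}"
    then have "J \<le> j" "v j \<noteq> 0" by auto
    then have "j \<le> N" using assms by (metis not_le)
    then show "j \<in> {J..N}" using \<open>J \<le> j\<close> by simp
  qed
  show ?thesis unfolding tail_def
    by (rule sum.mono_neutral_left[OF _ sub]) auto
qed

lemma down: assumes "\<forall>j>N. f j = (0::nat)" "\<forall>j\<le>N. f j = v j + f (Suc j)"
  shows "f J = (\<Sum>j\<in>{J..N}. v j)"
proof -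
  have "\<forall>J. Suc N - J = d \<longrightarrow> f J = (\<Sum>j\<in>{J..N}. v j)" for d
  proof (induction d)
    case 0
    then show ?case using assms(1) by auto
  next
    case (Suc d)
    show ?case
    proof (intro allI impI)
      fix J assume J: "Suc N - J = Suc d"
      then have "J \<le> N" by simp
      then have "f J = v J + f (Suc J)" using assms(2) by simp
      also have "f (Suc J) = (\<Sum>j\<in>{Suc J..N}. v j)" using Suc.IH J by simp
      finally show "f J = (\<Sum>j\<in>{J..N}. v j)" using \<open>J \<le> N\<close> by (simp add: sum.atLeast_Suc_atMost)
    qed
  qed
  then show ?thesis by simp
qed

lemma tail_step: assumes "\<forall>j>N. v j = 0" shows "tail v J = v J + tail v (Suc J)"
proof (cases "J \<le> N")
  case True
  then show ?thesis using tail_eq[OF assms] by (simp add: sum.atLeast_Suc_atMost)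
next
  case False
  then show ?thesis using tail_eq[OF assms] assms by simp
qed

lemma vmax_le:
  assumes fin: "finite A" and ne: "A \<noteq> {}" and z: "\<forall>h\<in>A. \<forall>j>N. h j = 0"
    and le: "\<forall>h\<in>A. \<forall>J. tail h J \<le> tail g J"
  shows "vmax A \<preceq>\<^sub>V g"
proof -
  define M where "M J = Max ((\<lambda>v. tail v J) ` A)" for J
  have finI: "finite ((\<lambda>v. tail v J) ` A)" for J using fin by simp
  have neI: "(\<lambda>v. tail v J) ` A \<noteq> {}" for J using ne by simp
  have Mz: "\<forall>j>N. M j = 0"
  proof (intro allI impI)
    fix j assume j: "j > N"
    have "tail h j = 0" if h: "h \<in> A" for h
    proof -
      have "\<forall>i>N. h i = 0" using z h by simp
      then have "tail h j = (\<Sum>i\<in>{j..N}. h i)" by (rule tail_eq)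
      then show ?thesis using j by simp
    qed
    then have "(\<lambda>v. tail v j) ` A = {0}" using ne by auto
    then show "M j = 0" unfolding M_def by simp
  qed
  have Mmono: "M (Suc J) \<le> M J" for J
  proof -
    have "tail h (Suc J) \<le> M J" if h: "h \<in> A" for h
    proof -
      have "\<forall>i>N. h i = 0" using z h by simp
      then have "tail h J = h J + tail h (Suc J)" by (rule tail_step)
      then have "tail h (Suc J) \<le> tail h J" by simp
      also have "tail h J \<le> M J" unfolding M_def using finI h by simp
      finally show ?thesis .
    qed
    then show ?thesis unfolding M_def[of "Suc J"] using finI neI by simp
  qed
  have vm: "vmax A J = M J - M (Suc J)" for J unfolding vmax_def M_def by simp
  have vz: "\<forall>j>N. vmax A j = 0" using Mz vm by simp
  have MJ: "M J = (\<Sum>j\<in>{J..N}. vmax A j)" for J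
  proof (rule down)
    show "\<forall>j>N. M j = 0" by (rule Mz)
    show "\<forall>j\<le>N. M j = vmax A j + M (Suc j)"
      using vm Mmono by (simp add: le_add_diff_inverse2)
  qed
  show ?thesis unfolding vle_def
  proof
    fix J
    have "tail (vmax A) J = M J" using tail_eq[OF vz] MJ by simp
    also have "M J \<le> tail g J" unfolding M_def using finI neI le by simp
    finally show "tail (vmax A) J \<le> tail g J" .
  qed
qed

lemma gamma_val: "gamma_bin n n' J = (if J \<le> n' \<and> n' - J \<le> n then n' choose (n'-J) else 0)"
proof -
  have "gamma_bin n n' J = (\<Sum>j\<le>n. if j = n' - J then (if J \<le> n' then n' choose (n'-J) else 0) else 0)"
    unfolding gamma_bin_def unitv_def
  proof (rule sum.cong)
    fix j assume "j \<in> {..n}"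
    show "(n' choose j) * (if J = n' - j then 1 else 0) =
          (if j = n' - J then (if J \<le> n' then n' choose (n'-J) else 0) else 0)"
    proof (cases "j \<le> n'")
      case True
      then show ?thesis by auto
    next
      case False
      then show ?thesis by (auto simp: binomial_eq_0)
    qed
  qed simp
  also have "\<dots> = (if n' - J \<in> {..n} then (if J \<le> n' then n' choose (n'-J) else 0) else 0)"
    by (rule sum.delta) simp
  finally show ?thesis by auto
qed

lemma gamma_z: "\<forall>j>n'. gamma_bin n n' j = 0" using gamma_val by simp

lemma tail_gamma: assumes "J \<le> n'" shows "tail (gamma_bin n n') J = G n' n (n'-J)"
proof -
  define f where "f J = (if J \<le> n' then G n' n (n'-J) else 0)" for J
  have "f J = (\<Sum>j\<in>{J..n'}. gamma_bin n n' j)"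
  proof (rule down)
    show "\<forall>j>n'. f j = 0" unfolding f_def by simp
    show "\<forall>j\<le>n'. f j = gamma_bin n n' j + f (Suc j)"
    proof (intro allI impI)
      fix j assume j: "j \<le> n'"
      show "f j = gamma_bin n n' j + f (Suc j)"
      proof (cases "j = n'")
        case True
        then show ?thesis unfolding f_def G_def by (simp add: gamma_val)
      next
        case False
        then have e: "n' - j = Suc (n' - Suc j)" using j by simp
        show ?thesis unfolding f_def using j False e G_Suc_k[of n' n "n' - Suc j"]
          by (simp add: gamma_val)
      qed
    qed
  qed
  then show ?thesis using tail_eq[OF gamma_z] assms unfolding f_def by simp
qed

lemma patterns_eq: "patterns n n' W b = Pats {..<n} n' W b"
proof
  show "patterns n n' W b \<subseteq> Pats {..<n} n' W b"
    unfolding patterns_def Pats_def act_pattern_def pat_def aff_def by auto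
next
  show "Pats {..<n} n' W b \<subseteq> patterns n n' W b"
  proof
    fix s assume "s \<in> Pats {..<n} n' W b"
    then obtain x where s: "s = pat {..<n} n' W b x" unfolding Pats_def by auto
    define x' where "x' = (\<lambda>k. if k < n then x k else 0)"
    have "(\<Sum>k<n. x' k * W i k) = (\<Sum>k<n. x k * W i k)" for i
      unfolding x'_def by (rule sum.cong) auto
    then have "s = act_pattern n n' W b x'" unfolding s act_pattern_def pat_def aff_def by simp
    moreover have "\<forall>k\<ge>n. x' k = 0" unfolding x'_def by simp
    ultimately show "s \<in> patterns n n' W b" unfolding patterns_def by blast
  qed
qed

lemma hist_z: "\<forall>j>n'. hist n' (Pats K n' W b) j = 0"
proof (intro allI impI)
  fix j assume j: "j > n'"
  have "{s \<in> Pats K n' W b. pat_size n' s = j} = {}"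
  proof (rule ccontr)
    assume "\<not> ?thesis"
    then obtain s where "s \<in> Pats K n' W b" "pat_size n' s = j" by blast
    then show False using pat_size_le[of s K n' W b] j by simp
  qed
  then show "hist n' (Pats K n' W b) j = 0" unfolding hist_def by (metis card.empty)
qed

lemma hist_le: "hist n' (Pats K n' W b) j \<le> 2 ^ n'"
proof -
  have "hist n' (Pats K n' W b) j \<le> card (Pats K n' W b)"
    unfolding hist_def by (rule card_mono[OF Pats_finite]) auto
  then show ?thesis using Pats_card order_trans by blast
qed

lemma tail_hist: "tail (hist n' (Pats K n' W b)) J = card {s \<in> Pats K n' W b. J \<le> pat_size n' s}"
proof -
  define P where "P = Pats K n' W b"
  define f where "f J = card {s \<in> P. J \<le> pat_size n' s}" for J
  have "f J = (\<Sum>j\<in>{J..n'}. hist n' P j)"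
  proof (rule down)
    show "\<forall>j>n'. f j = 0" unfolding f_def P_def using pat_size_le
      by (metis (no_types, lifting) card.empty empty_Collect_eq le_trans not_le)
    show "\<forall>j\<le>n'. f j = hist n' P j + f (Suc j)"
    proof (intro allI impI)
      fix j
      have "{s \<in> P. j \<le> pat_size n' s} = {s \<in> P. pat_size n' s = j} \<union> {s \<in> P. Suc j \<le> pat_size n' s}"
        by auto
      moreover have "finite P" unfolding P_def by (rule Pats_finite)
      ultimately show "f j = hist n' P j + f (Suc j)" unfolding f_def hist_def
        by (simp add: card_Un_disjoint disjoint_iff)
    qed
  qed
  then show ?thesis using tail_eq[OF hist_z] unfolding f_def P_def by simp
qed

theorem mainTheorem9:
  shows "bound_condition gamma_bin"
  unfolding bound_condition_def
proof (intro conjI allI impI)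
  fix n' n :: nat assume nn: "1 \<le> n' \<and> n \<le> n'"
  have "{j. gamma_bin n n' j \<noteq> 0} \<subseteq> {..n'}" using gamma_z[of n' n] by (metis (mono_tags, lifting) atMost_iff mem_Collect_eq not_le subsetI)
  then show "inV (gamma_bin n n')" unfolding inV_def using finite_subset by blast
next
  fix n' n m :: nat assume nm: "1 \<le> n' \<and> n \<le> m \<and> m \<le> n'"
  show "gamma_bin n n' \<preceq>\<^sub>V gamma_bin m n'" unfolding vle_def
  proof
    fix J
    have pw: "gamma_bin n n' j \<le> gamma_bin m n' j" for j
      unfolding gamma_bin_def by (rule sum_mono2) (use nm in auto)
    show "tail (gamma_bin n n') J \<le> tail (gamma_bin m n') J"
      unfolding tail_eq[OF gamma_z[of n' n]] tail_eq[OF gamma_z[of n' m]]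
      by (rule sum_mono) (rule pw)
  qed
next
  fix n' n :: nat assume nn: "1 \<le> n' \<and> n \<le> n'"
  show "vmax (hist_family n n') \<preceq>\<^sub>V gamma_bin n n'"
  proof (cases "n = 0")
    case True
    then have hf: "hist_family n n' = {\<ee> 0}" unfolding hist_family_def by simp
    have ez: "\<forall>j>n'. \<ee> 0 j = 0" unfolding unitv_def by simp
    show ?thesis unfolding hf
    proof (rule vmax_le[where N=n'])
      show "\<forall>h\<in>{\<ee> 0}. \<forall>j>n'. h j = 0" using ez by simp
      show "\<forall>h\<in>{\<ee> 0}. \<forall>J. tail h J \<le> tail (gamma_bin n n') J"
      proof (intro ballI allI)
        fix h J assume "h \<in> {\<ee> 0}"
        then have h: "h = \<ee> 0" by simp
        show "tail h J \<le> tail (gamma_bin n n') J"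
        proof (cases "J \<le> n'")
          case True
          have "tail h J = (\<Sum>j\<in>{J..n'}. h j)" using tail_eq[OF ez] h by simp
          also have "\<dots> = (\<Sum>j\<in>{J..n'}. if j = 0 then 1 else 0)" unfolding h unitv_def by simp
          also have "\<dots> = (if 0 \<in> {J..n'} then 1 else 0)" by (rule sum.delta) simp
          also have "\<dots> \<le> 1" by simp
          also have "1 = G n' n (n' - J)" unfolding G_def using \<open>n = 0\<close> by simp
          also have "\<dots> = tail (gamma_bin n n') J" using tail_gamma[OF True] by simp
          finally show ?thesis .
        next
          case False
          have "tail h J = (\<Sum>j\<in>{J..n'}. h j)" using tail_eq[OF ez] h by simp
          then show ?thesis using False by simp
        qed
      qed
    qed auto
  next
    case False
    define A where "A = hist_family n n'"
    have A: "A = {hist n' (Pats {..<n} n' W b) | W b. True}"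
      unfolding A_def hist_family_def using False patterns_eq by simp
    define F where "F = {f. \<forall>x. (x \<in> {..n'} \<longrightarrow> f x \<in> {..(2::nat)^n'}) \<and> (x \<notin> {..n'} \<longrightarrow> f x = 0)}"
    have finF: "finite F" unfolding F_def
      by (rule finite_set_of_finite_funs) simp_all
    have subF: "A \<subseteq> F"
    proof
      fix h assume "h \<in> A"
      then obtain W b where h: "h = hist n' (Pats {..<n} n' W b)" unfolding A by blast
      have "h x \<le> 2^n'" for x unfolding h by (rule hist_le)
      moreover have "\<not> x \<le> n' \<Longrightarrow> h x = 0" for x unfolding h using hist_z[of n'] by (simp add: not_le)
      ultimately show "h \<in> F" unfolding F_def by simp
    qed
    have finA: "finite A" using finite_subset[OF subF finF] .
    have "hist n' (Pats {..<n} n' (\<lambda>_ _. 0) (\<lambda>_. 0)) \<in> A" unfolding A by blast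
    then have neA: "A \<noteq> {}" by blast
    show ?thesis unfolding A_def[symmetric]
    proof (rule vmax_le[OF finA neA, where N=n'])
      show "\<forall>h\<in>A. \<forall>j>n'. h j = 0"
      proof
        fix h assume "h \<in> A"
        then obtain W b where h: "h = hist n' (Pats {..<n} n' W b)" unfolding A by blast
        show "\<forall>j>n'. h j = 0" unfolding h by (rule hist_z)
      qed
      show "\<forall>h\<in>A. \<forall>J. tail h J \<le> tail (gamma_bin n n') J"
      proof (intro ballI allI)
        fix h J assume "h \<in> A"
        then obtain W b where h: "h = hist n' (Pats {..<n} n' W b)" unfolding A by blast
        show "tail h J \<le> tail (gamma_bin n n') J"
        proof (cases "J \<le> n'")
          case True
          have "tail h J = card {s \<in> Pats {..<n} n' W b. J \<le> pat_size n' s}"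
            unfolding h by (rule tail_hist)
          also have "{s \<in> Pats {..<n} n' W b. J \<le> pat_size n' s} =
                     {s \<in> Pats {..<n} n' W b. n' \<le> pat_size n' s + (n' - J)}"
            by (intro Collect_cong conj_cong refl) (use True in linarith)
          also have "card \<dots> \<le> G n' (card {..<n}) (n' - J)" by (rule key) simp
          also have "\<dots> = tail (gamma_bin n n') J" using tail_gamma[OF True] by simp
          finally show ?thesis .
        next
          case False
          have "tail h J = (\<Sum>j\<in>{J..n'}. h j)" unfolding h by (rule tail_eq[OF hist_z])
          then have "tail h J = 0" using False by simp
          then show ?thesis by simp
        qed
      qed
    qed
  qed
qed

end
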